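(* Let $(X,\Sigma)$ be a random pair valued in $\mathcal{X}\times\mathfrak{S}_n$. Suppose that $P_x\in\mathcal{T}$ for all $x\in\mathcal{X}$ and that $H=\inf_{x\in\mathcal{X}}\min_{i<j}|p_{i,j}(x)-1/2|>0$. Let $s:\mathcal{X}\to\mathfrak{S}_n$ be measurable and set $$Z(s)=\sum_{i<j}\mathbb{I}\{(\Sigma(i)-\Sigma(j))(s(X)(i)-s(X)(j))<0\}-\sum_{i<j}\mathbb{I}\{(\Sigma(i)-\Sigma(j))(\sigma^*_{P_X}(i)-\sigma^*_{P_X}(j))<0\}.$$ Then $$\mathrm{Var}(Z(s))\le\Big(\frac{n(n-1)}{2H}\Big)\times(\mathcal{R}(s)-\mathcal{R}^* ).$$
   Context: $\mathfrak{S}_n$ is the set of permutations of $\{1,\dots,n\}$. The Kendall $\tau$ distance is $d_\tau(\sigma,\sigma')=\sum_{i<j}\mathbb{I}\{(\sigma(i)-\sigma(j))(\sigma'(i)-\sigma'(j))<0\}$. Conditional objects: $P_x$ is the conditional law of $\Sigma$ given $X=x$, and $p_{i,j}(x)=\mathbb{P}\{\Sigma(i)<\Sigma(j)\mid X=x\}$. $\mathcal{T}$ is the set of distributions $P$ on $\mathfrak{S}_n$ whose pairwise probabilities $p_{i,j}=\mathbb{P}_{\Sigma\sim P}\{\Sigma(i)<\Sigma(j)\}$ satisfy (a) $p_{i,j}\ge1/2$ and $p_{j,k}\ge1/2$ imply $p_{i,k}\ge1/2$, and (b) $p_{i,j}\ne1/2$ for $i<j$. For $P\in\mathcal{T}$,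 $\sigma^*_P(i)=1+\sum_{k\ne i}\mathbb{I}\{p_{i,k}<1/2\}$ is the unique Kemeny median, i.e. the unique minimizer of $\sigma\mapsto\mathbb{E}_{\Sigma\sim P}[d_\tau(\Sigma,\sigma)]$. The risk is $\mathcal{R}(s)=\mathbb{E}[d_\tau(s(X),\Sigma)]$, and $\mathcal{R}^*$ is its infimum over measurable rules $\mathcal{X}\to\mathfrak{S}_n$. *)

theory Defs
  imports "HOL-Probability.Probability" "HOL-Combinatorics.Permutations"
begin

definition perms :: "nat \<Rightarrow> (nat \<Rightarrow> nat) set" where
  "perms n = {\<sigma>. \<sigma> permutes {1..n}}"

definition kendall :: "nat \<Rightarrow> (nat \<Rightarrow> nat) \<Rightarrow> (nat \<Rightarrow> nat) \<Rightarrow> nat" where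
  "kendall n \<sigma> \<sigma>' = card {(i,j). 1 \<le> i \<and> i < j \<and> j \<le> n \<and>
      (int (\<sigma> i) - int (\<sigma> j)) * (int (\<sigma>' i) - int (\<sigma>' j)) < 0}"

definition pairp :: "(nat \<Rightarrow> nat) pmf \<Rightarrow> nat \<Rightarrow> nat \<Rightarrow> real" where
  "pairp Q i j = measure_pmf.prob Q {\<sigma>. \<sigma> i < \<sigma> j}"

definition in_T :: "nat \<Rightarrow> (nat \<Rightarrow> nat) pmf \<Rightarrow> bool" where
  "in_T n Q \<longleftrightarrow> set_pmf Q \<subseteq> perms n \<and>
     (\<forall>i\<in>{1..n}. \<forall>j\<in>{1..n}. \<forall>k\<in>{1..n}. i \<noteq> j \<and> j \<noteq> k \<and> i \<noteq> k \<longrightarrow>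
        pairp Q i j \<ge> 1/2 \<longrightarrow> pairp Q j k \<ge> 1/2 \<longrightarrow> pairp Q i k \<ge> 1/2) \<and>
     (\<forall>i\<in>{1..n}. \<forall>j\<in>{1..n}. i < j \<longrightarrow> pairp Q i j \<noteq> 1/2)"

text \<open>Kemeny median sigma^*_Q (identity outside {1..n}).\<close>
definition kemeny :: "nat \<Rightarrow> (nat \<Rightarrow> nat) pmf \<Rightarrow> nat \<Rightarrow> nat" where
  "kemeny n Q i = (if i \<in> {1..n}
      then 1 + card {k\<in>{1..n}. k \<noteq> i \<and> pairp Q i k < 1/2} else i)"

text \<open>Expectation of f(X,Sigma) where X ~ mu and Sigma | X=x ~ P x.\<close>
definition expect :: "'a measure \<Rightarrow> ('a \<Rightarrow> (nat \<Rightarrow> nat) pmf) \<Rightarrow> ('a \<Rightarrow> (nat \<Rightarrow> nat) \<Rightarrow> real) \<Rightarrow> real" where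
  "expect \<mu> P f = (\<integral>x. measure_pmf.expectation (P x) (f x) \<partial>\<mu>)"

definition variance_of :: "'a measure \<Rightarrow> ('a \<Rightarrow> (nat \<Rightarrow> nat) pmf) \<Rightarrow> ('a \<Rightarrow> (nat \<Rightarrow> nat) \<Rightarrow> real) \<Rightarrow> real" where
  "variance_of \<mu> P f = expect \<mu> P (\<lambda>x \<sigma>. (f x \<sigma> - expect \<mu> P f)\<^sup>2)"

definition risk :: "nat \<Rightarrow> 'a measure \<Rightarrow> ('a \<Rightarrow> (nat \<Rightarrow> nat) pmf) \<Rightarrow> ('a \<Rightarrow> nat \<Rightarrow> nat) \<Rightarrow> real" where
  "risk n \<mu> P s = expect \<mu> P (\<lambda>x \<sigma>. real (kendall n (s x) \<sigma>))"

definition risk_star :: "nat \<Rightarrow> 'a measure \<Rightarrow> ('a \<Rightarrow> (nat \<Rightarrow> nat) pmf) \<Rightarrow> real" where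
  "risk_star n \<mu> P = (INF s \<in> measurable \<mu> (count_space (perms n)). risk n \<mu> P s)"

definition Zs :: "nat \<Rightarrow> ('a \<Rightarrow> (nat \<Rightarrow> nat) pmf) \<Rightarrow> ('a \<Rightarrow> nat \<Rightarrow> nat) \<Rightarrow> 'a \<Rightarrow> (nat \<Rightarrow> nat) \<Rightarrow> real" where
  "Zs n P s x \<sigma> = real (kendall n \<sigma> (s x)) - real (kendall n \<sigma> (kemeny n (P x)))"

definition margin :: "nat \<Rightarrow> 'a measure \<Rightarrow> ('a \<Rightarrow> (nat \<Rightarrow> nat) pmf) \<Rightarrow> real" where
  "margin n \<mu> P = (INF x \<in> space \<mu>.
      Min {\<bar>pairp (P x) i j - 1/2\<bar> | i j. 1 \<le> i \<and> i < j \<and> j \<le> n})"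

end

theory Submission
  imports Defs
begin
definition pairsA :: "nat \<Rightarrow> (nat \<times> nat) set" where
  "pairsA n = {(i,j). 1 \<le> i \<and> i < j \<and> j \<le> n}"
definition ind :: "(nat\<Rightarrow>nat) \<Rightarrow> (nat\<Rightarrow>nat) \<Rightarrow> nat \<times> nat \<Rightarrow> real" where
  "ind a b p = (if (int (a (fst p)) - int (a (snd p))) * (int (b (fst p)) - int (b (snd p))) < 0 then 1 else 0)"
lemma finite_pairsA: "finite (pairsA n)"
  by (rule finite_subset[of _ "{1..n} \<times> {1..n}"]) (auto simp: pairsA_def)
lemma card_pairsA: "card (pairsA n) \<le> n * (n - 1)"
proof -
  have "pairsA n \<subseteq> {1..n} \<times> {2..n}" by (auto simp: pairsA_def)
  then have "card (pairsA n) \<le> card ({1..n} \<times> {2..n::nat})" by (intro card_mono) auto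
  thus ?thesis by (simp add: card_cartesian_product)
qed
lemma kendall_sum: "real (kendall n a b) = (\<Sum>p\<in>pairsA n. ind a b p)"
proof -
  have "kendall n a b = card {p\<in>pairsA n. (int (a (fst p)) - int (a (snd p))) * (int (b (fst p)) - int (b (snd p))) < 0}"
    unfolding kendall_def pairsA_def by (rule arg_cong[where f=card]) auto
  also have "real \<dots> = (\<Sum>p\<in>pairsA n. ind a b p)"
    unfolding ind_def using finite_pairsA by (simp add: sum.If_cases Int_def)
  finally show ?thesis .
qed
lemma kendall_sym: "kendall n a b = kendall n b a"
  unfolding kendall_def by (simp add: mult.commute)

lemma finite_perms: "finite (perms n)"
  unfolding perms_def by (rule finite_permutations) simp

lemma exp_sum: "set_pmf Q \<subseteq> perms n \<Longrightarrow> measure_pmf.expectation Q f = (\<Sum>\<sigma>\<in>perms n. pmf Q \<sigma> * f \<sigma>)"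
  using integral_measure_pmf_real[of "perms n" Q f] finite_perms by (auto simp: mult.commute)

lemma pairp_sum: "set_pmf Q \<subseteq> perms n \<Longrightarrow> pairp Q i j = (\<Sum>\<sigma>\<in>perms n. pmf Q \<sigma> * (if \<sigma> i < \<sigma> j then 1 else 0))"
proof -
  assume a: "set_pmf Q \<subseteq> perms n"
  have "pairp Q i j = measure_pmf.expectation Q (indicator {\<sigma>. \<sigma> i < \<sigma> j})"
    by (simp add: pairp_def)
  also have "\<dots> = (\<Sum>\<sigma>\<in>perms n. pmf Q \<sigma> * indicator {\<sigma>. \<sigma> i < \<sigma> j} \<sigma>)"
    by (rule exp_sum[OF a])
  also have "\<dots> = (\<Sum>\<sigma>\<in>perms n. pmf Q \<sigma> * (if \<sigma> i < \<sigma> j then 1 else 0))"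
    by (rule sum.cong) (auto simp: indicator_def)
  finally show ?thesis .
qed

lemma perms_inj: "\<sigma> \<in> perms n \<Longrightarrow> i \<noteq> j \<Longrightarrow> \<sigma> i \<noteq> \<sigma> j"
  unfolding perms_def using permutes_inj by (metis inj_eq mem_Collect_eq)

lemma pairp_compl: "set_pmf Q \<subseteq> perms n \<Longrightarrow> i \<noteq> j \<Longrightarrow> pairp Q i j + pairp Q j i = 1"
proof -
  assume a: "set_pmf Q \<subseteq> perms n" "i \<noteq> j"
  have "pairp Q i j + pairp Q j i = (\<Sum>\<sigma>\<in>perms n. pmf Q \<sigma> * ((if \<sigma> i < \<sigma> j then 1 else 0) + (if \<sigma> j < \<sigma> i then 1 else 0)))"
    using a by (simp add: pairp_sum sum.distrib[symmetric] algebra_simps)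
  also have "\<dots> = (\<Sum>\<sigma>\<in>perms n. pmf Q \<sigma>)"
    apply (rule sum.cong, simp)
    subgoal for \<sigma> using perms_inj[of \<sigma> n i j] a(2) by (cases "\<sigma> i < \<sigma> j") auto
    done
  also have "\<dots> = 1" using sum_pmf_eq_1[OF finite_perms a(1)] .
  finally show ?thesis .
qed

lemma pairp_ne: "in_T n Q \<Longrightarrow> i \<in> {1..n} \<Longrightarrow> j \<in> {1..n} \<Longrightarrow> i \<noteq> j \<Longrightarrow> pairp Q i j \<noteq> 1/2"
proof -
  assume a: "in_T n Q" "i \<in> {1..n}" "j \<in> {1..n}" "i \<noteq> j"
  show ?thesis
  proof (cases "i < j")
    case True then show ?thesis using a unfolding in_T_def by blast
  next
    case False
    then have "pairp Q j i \<noteq> 1/2" using a unfolding in_T_def by auto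
    moreover have "pairp Q i j + pairp Q j i = 1" using a pairp_compl unfolding in_T_def by blast
    ultimately show ?thesis by linarith
  qed
qed

lemma kem_lt: assumes "in_T n Q" "i \<in> {1..n}" "j \<in> {1..n}" "i \<noteq> j" "pairp Q i j > 1/2"
  shows "kemeny n Q i < kemeny n Q j"
proof -
  let ?S = "\<lambda>i. {k\<in>{1..n}. k \<noteq> i \<and> pairp Q i k < 1/2}"
  have compl: "pairp Q i j + pairp Q j i = 1" using assms pairp_compl unfolding in_T_def by blast
  have sub: "?S i \<subseteq> ?S j"
  proof
    fix k assume k: "k \<in> ?S i"
    then have kj: "k \<noteq> j" using assms(5) by auto
    show "k \<in> ?S j"
    proof (rule ccontr)
      assume "k \<notin> ?S j"
      then have "pairp Q j k \<ge> 1/2" using k kj by auto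
      then have "pairp Q i k \<ge> 1/2" using assms k kj unfolding in_T_def by auto
      then show False using k by auto
    qed
  qed
  have "i \<in> ?S j" "i \<notin> ?S i" using assms compl by auto
  then have "?S i \<subset> ?S j" using sub by blast
  then have "card (?S i) < card (?S j)" by (intro psubset_card_mono) auto
  then show ?thesis using assms unfolding kemeny_def by simp
qed

lemma kem_ne: assumes "in_T n Q" "i \<in> {1..n}" "j \<in> {1..n}" "i \<noteq> j"
  shows "kemeny n Q i \<noteq> kemeny n Q j"
proof -
  have compl: "pairp Q i j + pairp Q j i = 1" using assms pairp_compl unfolding in_T_def by blast
  have "pairp Q i j \<noteq> 1/2" using pairp_ne assms by blast
  then have "pairp Q i j > 1/2 \<or> pairp Q j i > 1/2" using compl by linarith
  then show ?thesis using kem_lt[OF assms] kem_lt[OF assms(1,3,2) assms(4)[symmetric]] by force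
qed

lemma kem_perm: assumes "in_T n Q" shows "kemeny n Q \<in> perms n"
proof -
  let ?k = "kemeny n Q"
  have img: "?k ` {1..n} \<subseteq> {1..n}"
  proof
    fix y assume "y \<in> ?k ` {1..n}"
    then obtain i where i: "i \<in> {1..n}" "y = ?k i" by auto
    have "{k\<in>{1..n}. k \<noteq> i \<and> pairp Q i k < 1/2} \<subseteq> {1..n} - {i}" by auto
    then have "card {k\<in>{1..n}. k \<noteq> i \<and> pairp Q i k < 1/2} \<le> card ({1..n} - {i})"
      by (intro card_mono) auto
    also have "\<dots> = n - 1" using i by simp
    finally show "y \<in> {1..n}" using i unfolding kemeny_def by auto
  qed
  have inj: "inj_on ?k {1..n}" using kem_ne[OF assms] by (meson inj_onI)
  have "?k ` {1..n} = {1..n}" using endo_inj_surj[OF _ img inj] by simp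
  then have bij: "bij_betw ?k {1..n} {1..n}" using inj by (simp add: bij_betw_def)
  have st: "\<And>x. x \<notin> {1..n} \<Longrightarrow> ?k x = x" unfolding kemeny_def by auto
  show ?thesis unfolding perms_def using bij_imp_permutes[OF bij st] by blast
qed
lemma ind_alt: "a i \<noteq> a j \<Longrightarrow> ind \<sigma> a (i,j) = (if a i < a j then (if \<sigma> j < \<sigma> i then 1 else 0) else (if \<sigma> i < \<sigma> j then 1 else 0))"
  unfolding ind_def by (auto simp: mult_less_0_iff)

lemma ind_nonneg: "0 \<le> ind a b p" and ind_le1: "ind a b p \<le> 1"
  unfolding ind_def by auto

lemma exp_diff: "set_pmf Q \<subseteq> perms n \<Longrightarrow> measure_pmf.expectation Q (\<lambda>\<sigma>. f \<sigma> - (g \<sigma> :: real)) = measure_pmf.expectation Q f - measure_pmf.expectation Q g"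
proof -
  assume a: "set_pmf Q \<subseteq> perms n"
  show ?thesis unfolding exp_sum[OF a] by (simp add: right_diff_distrib sum_subtractf)
qed

lemma E_ind: "set_pmf Q \<subseteq> perms n \<Longrightarrow> a i \<noteq> a j \<Longrightarrow>
   measure_pmf.expectation Q (\<lambda>\<sigma>. ind \<sigma> a (i,j)) = (if a i < a j then pairp Q j i else pairp Q i j)"
  by (cases "a i < a j") (simp_all add: exp_sum pairp_sum ind_alt)

lemma pair_exp:
  assumes "in_T n Q" "t \<in> perms n" "(i,j) \<in> pairsA n"
  shows "measure_pmf.expectation Q (\<lambda>\<sigma>. ind \<sigma> t (i,j) - ind \<sigma> (kemeny n Q) (i,j))
         = ind t (kemeny n Q) (i,j) * \<bar>pairp Q i j - pairp Q j i\<bar>"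
proof -
  let ?k = "kemeny n Q"
  have sp: "set_pmf Q \<subseteq> perms n" using assms(1) unfolding in_T_def by blast
  have ij: "i \<in> {1..n}" "j \<in> {1..n}" "i \<noteq> j" using assms(3) unfolding pairsA_def by auto
  have t: "t i \<noteq> t j" using perms_inj[OF assms(2) ij(3)] .
  have k: "?k i \<noteq> ?k j" using kem_ne[OF assms(1) ij] .
  have c: "pairp Q i j + pairp Q j i = 1" using pairp_compl[OF sp ij(3)] .
  have ne: "pairp Q i j \<noteq> 1/2" using pairp_ne[OF assms(1) ij] .
  have E: "measure_pmf.expectation Q (\<lambda>\<sigma>. ind \<sigma> t (i,j) - ind \<sigma> ?k (i,j))
     = (if t i < t j then pairp Q j i else pairp Q i j) - (if ?k i < ?k j then pairp Q j i else pairp Q i j)"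
    unfolding exp_diff[OF sp] E_ind[of Q n t i j, OF sp t] E_ind[of Q n ?k i j, OF sp k] by (rule refl)
  show ?thesis
  proof (cases "pairp Q i j > 1/2")
    case True
    then have "?k i < ?k j" using kem_lt[OF assms(1) ij] by blast
    then show ?thesis using E t c True by (auto simp: ind_alt[of ?k i j] k)
  next
    case False
    then have "pairp Q j i > 1/2" using ne c by linarith
    then have "?k j < ?k i" using kem_lt[OF assms(1) ij(2,1) ij(3)[symmetric]] by blast
    then show ?thesis using E t c False ne by (auto simp: ind_alt[of ?k i j] k)
  qed
qed

lemma pair_abs:
  assumes "t i \<noteq> t j" "k i \<noteq> k j"
  shows "\<bar>ind \<sigma> t (i,j) - ind \<sigma> k (i,j)\<bar> \<le> ind t k (i,j)"
  using assms by (auto simp: ind_alt)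
lemma pointwise:
  assumes T: "in_T n Q" and t: "t \<in> perms n" and H: "H > 0"
    and marg: "\<forall>p\<in>pairsA n. H \<le> \<bar>pairp Q (fst p) (snd p) - 1/2\<bar>"
  defines "Zf \<equiv> \<lambda>\<sigma>. real (kendall n \<sigma> t) - real (kendall n \<sigma> (kemeny n Q))"
  shows "0 \<le> measure_pmf.expectation Q Zf"
    and "measure_pmf.expectation Q Zf \<le> real (n * (n - 1))"
    and "0 \<le> measure_pmf.expectation Q (\<lambda>\<sigma>. (Zf \<sigma>)\<^sup>2)"
    and "measure_pmf.expectation Q (\<lambda>\<sigma>. (Zf \<sigma>)\<^sup>2) \<le> real (n * (n - 1)) / (2 * H) * measure_pmf.expectation Q Zf"
proof -
  let ?k = "kemeny n Q"
  let ?A = "pairsA n"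
  have sp: "set_pmf Q \<subseteq> perms n" using T unfolding in_T_def by blast
  define D where "D = (\<Sum>p\<in>?A. ind t ?k p)"
  have Zs: "Zf \<sigma> = (\<Sum>p\<in>?A. ind \<sigma> t p - ind \<sigma> ?k p)" for \<sigma>
    unfolding Zf_def kendall_sum by (simp add: sum_subtractf)
  have injs: "t (fst p) \<noteq> t (snd p)" "?k (fst p) \<noteq> ?k (snd p)" if "p \<in> ?A" for p
    using that perms_inj[OF t] kem_ne[OF T] unfolding pairsA_def by auto
  have EZ: "measure_pmf.expectation Q Zf = (\<Sum>p\<in>?A. ind t ?k p * \<bar>pairp Q (fst p) (snd p) - pairp Q (snd p) (fst p)\<bar>)"
  proof -
    have "measure_pmf.expectation Q Zf = (\<Sum>\<sigma>\<in>perms n. pmf Q \<sigma> * (\<Sum>p\<in>?A. ind \<sigma> t p - ind \<sigma> ?k p))"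
      unfolding exp_sum[OF sp] Zs ..
    also have "\<dots> = (\<Sum>p\<in>?A. \<Sum>\<sigma>\<in>perms n. pmf Q \<sigma> * (ind \<sigma> t p - ind \<sigma> ?k p))"
      by (simp add: sum_distrib_left sum.swap[of _ "perms n"])
    also have "\<dots> = (\<Sum>p\<in>?A. measure_pmf.expectation Q (\<lambda>\<sigma>. ind \<sigma> t p - ind \<sigma> ?k p))"
      unfolding exp_sum[OF sp] ..
    also have "\<dots> = (\<Sum>p\<in>?A. ind t ?k p * \<bar>pairp Q (fst p) (snd p) - pairp Q (snd p) (fst p)\<bar>)"
    proof (rule sum.cong[OF refl])
      fix p assume p: "p \<in> ?A"
      obtain i j where pij: "p = (i,j)" by (cases p)
      show "measure_pmf.expectation Q (\<lambda>\<sigma>. ind \<sigma> t p - ind \<sigma> ?k p) = ind t ?k p * \<bar>pairp Q (fst p) (snd p) - pairp Q (snd p) (fst p)\<bar>"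
        using pair_exp[OF T t, of i j] p pij by simp
    qed
    finally show ?thesis .
  qed
  have pq: "\<bar>pairp Q (fst p) (snd p) - pairp Q (snd p) (fst p)\<bar> = 2 * \<bar>pairp Q (fst p) (snd p) - 1/2\<bar>" if "p \<in> ?A" for p
  proof -
    have "pairp Q (fst p) (snd p) + pairp Q (snd p) (fst p) = 1"
      using pairp_compl[OF sp] that unfolding pairsA_def by auto
    then show ?thesis by (simp add: abs_if)
  qed
  have pq_le: "\<bar>pairp Q (fst p) (snd p) - pairp Q (snd p) (fst p)\<bar> \<le> 1" if "p \<in> ?A" for p
  proof -
    have "pairp Q (fst p) (snd p) + pairp Q (snd p) (fst p) = 1"
      using pairp_compl[OF sp] that unfolding pairsA_def by auto
    moreover have "0 \<le> pairp Q (fst p) (snd p)" "0 \<le> pairp Q (snd p) (fst p)"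
      unfolding pairp_def by auto
    ultimately show ?thesis by (simp add: abs_if)
  qed
  have D0: "0 \<le> D" unfolding D_def by (intro sum_nonneg ind_nonneg)
  have DA: "D \<le> real (card ?A)"
  proof -
    have "D \<le> (\<Sum>p\<in>?A. 1)" unfolding D_def by (intro sum_mono ind_le1)
    then show ?thesis by simp
  qed
  have cA: "real (card ?A) \<le> real (n * (n - 1))" using card_pairsA of_nat_mono by blast
  have E_ge: "2 * H * D \<le> measure_pmf.expectation Q Zf"
  proof -
    have "2 * H * D = (\<Sum>p\<in>?A. ind t ?k p * (2 * H))" unfolding D_def
      by (simp add: sum_distrib_left sum_distrib_right mult.commute)
    also have "\<dots> \<le> (\<Sum>p\<in>?A. ind t ?k p * \<bar>pairp Q (fst p) (snd p) - pairp Q (snd p) (fst p)\<bar>)"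
      by (intro sum_mono mult_left_mono) (use marg pq ind_nonneg in auto)
    finally show ?thesis using EZ by simp
  qed
  show E0: "0 \<le> measure_pmf.expectation Q Zf" proof -
    have "0 \<le> 2 * H * D" using H D0 by simp
    then show ?thesis using E_ge by linarith
  qed
  show "measure_pmf.expectation Q Zf \<le> real (n * (n - 1))"
  proof -
    have "measure_pmf.expectation Q Zf \<le> (\<Sum>p\<in>?A. 1)" unfolding EZ
      by (intro sum_mono mult_le_one ind_le1 ind_nonneg pq_le) auto
    then show ?thesis using cA by simp
  qed
  have Zb: "(Zf \<sigma>)\<^sup>2 \<le> real (card ?A) * D" for \<sigma>
  proof -
    have "\<bar>Zf \<sigma>\<bar> \<le> (\<Sum>p\<in>?A. \<bar>ind \<sigma> t p - ind \<sigma> ?k p\<bar>)" unfolding Zs by (rule sum_abs)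
    also have "\<dots> \<le> D" unfolding D_def
    proof (intro sum_mono)
      fix p assume p: "p \<in> ?A"
      obtain i j where pij: "p = (i,j)" by (cases p)
      show "\<bar>ind \<sigma> t p - ind \<sigma> ?k p\<bar> \<le> ind t ?k p"
        using pair_abs[of t i j ?k \<sigma>] injs[OF p] pij by simp
    qed
    finally have "\<bar>Zf \<sigma>\<bar> \<le> D" .
    then have "(Zf \<sigma>)\<^sup>2 \<le> D\<^sup>2" by (metis abs_ge_zero power2_abs power_mono)
    also have "\<dots> \<le> real (card ?A) * D" unfolding power2_eq_square using DA D0 by (intro mult_right_mono) auto
    finally show ?thesis .
  qed
  have E2: "measure_pmf.expectation Q (\<lambda>\<sigma>. (Zf \<sigma>)\<^sup>2) \<le> real (card ?A) * D"
  proof -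
    have "measure_pmf.expectation Q (\<lambda>\<sigma>. (Zf \<sigma>)\<^sup>2) \<le> (\<Sum>\<sigma>\<in>perms n. pmf Q \<sigma> * (real (card ?A) * D))"
      unfolding exp_sum[OF sp] by (intro sum_mono mult_left_mono Zb) auto
    also have "\<dots> = real (card ?A) * D" using sum_pmf_eq_1[OF finite_perms sp] by (simp add: sum_distrib_right[symmetric])
    finally show ?thesis .
  qed
  show "0 \<le> measure_pmf.expectation Q (\<lambda>\<sigma>. (Zf \<sigma>)\<^sup>2)"
    unfolding exp_sum[OF sp] by (intro sum_nonneg mult_nonneg_nonneg) auto
  have "real (card ?A) * D \<le> real (n * (n - 1)) * (measure_pmf.expectation Q Zf / (2 * H))"
  proof (rule mult_mono[OF cA])
    show "D \<le> measure_pmf.expectation Q Zf / (2 * H)" using E_ge H by (simp add: field_simps)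
  qed (use D0 in auto)
  then show "measure_pmf.expectation Q (\<lambda>\<sigma>. (Zf \<sigma>)\<^sup>2) \<le> real (n * (n - 1)) / (2 * H) * measure_pmf.expectation Q Zf"
    using E2 by simp
qed
lemma exp_bound: "set_pmf Q \<subseteq> perms n \<Longrightarrow> (\<And>\<sigma>. \<sigma> \<in> perms n \<Longrightarrow> \<bar>f \<sigma>\<bar> \<le> (B::real)) \<Longrightarrow> \<bar>measure_pmf.expectation Q f\<bar> \<le> B"
proof -
  assume sp: "set_pmf Q \<subseteq> perms n" and b: "\<And>\<sigma>. \<sigma> \<in> perms n \<Longrightarrow> \<bar>f \<sigma>\<bar> \<le> B"
  have "\<bar>measure_pmf.expectation Q f\<bar> \<le> (\<Sum>\<sigma>\<in>perms n. \<bar>pmf Q \<sigma> * f \<sigma>\<bar>)"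
    unfolding exp_sum[OF sp] by (rule sum_abs)
  also have "\<dots> \<le> (\<Sum>\<sigma>\<in>perms n. pmf Q \<sigma> * B)"
    by (intro sum_mono) (auto simp: abs_mult intro: mult_left_mono b)
  also have "\<dots> = B" using sum_pmf_eq_1[OF finite_perms sp] by (simp add: sum_distrib_right[symmetric])
  finally show ?thesis .
qed

lemma kendall_le: "real (kendall n a b) \<le> real (n * (n - 1))"
proof -
  have "real (kendall n a b) \<le> (\<Sum>p\<in>pairsA n. 1)" unfolding kendall_sum by (intro sum_mono ind_le1)
  also have "\<dots> = real (card (pairsA n))" by simp
  also have "\<dots> \<le> real (n * (n - 1))" using card_pairsA of_nat_le_iff by blast
  finally show ?thesis .
qed

lemma kem_real: "i \<in> {1..n} \<Longrightarrow> real (kemeny n Q i) = 1 + (\<Sum>k\<in>{1..n}. if k \<noteq> i \<and> pairp Q i k < 1/2 then 1 else 0)"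
  unfolding kemeny_def by (simp add: sum.If_cases Int_def)

lemma kap_meas:
  assumes pm: "\<And>\<sigma>. (\<lambda>x. pmf (P x) \<sigma>) \<in> borel_measurable \<mu>"
    and T: "\<forall>x\<in>space \<mu>. in_T n (P x)"
  shows "(\<lambda>x. kemeny n (P x)) \<in> measurable \<mu> (count_space (perms n))"
proof -
  note [measurable] = pm
  have sp: "set_pmf (P x) \<subseteq> perms n" if "x \<in> space \<mu>" for x using T that unfolding in_T_def by blast
  have pp[measurable]: "(\<lambda>x. pairp (P x) i j) \<in> borel_measurable \<mu>" for i j
  proof -
    have "(\<lambda>x. pairp (P x) i j) \<in> borel_measurable \<mu> \<longleftrightarrow> (\<lambda>x. \<Sum>\<sigma>\<in>perms n. pmf (P x) \<sigma> * (if \<sigma> i < \<sigma> j then 1 else 0)) \<in> borel_measurable \<mu>"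
      by (rule measurable_cong) (simp add: pairp_sum sp)
    moreover have "(\<lambda>x. \<Sum>\<sigma>\<in>perms n. pmf (P x) \<sigma> * (if \<sigma> i < \<sigma> j then 1 else 0)) \<in> borel_measurable \<mu>"
      by measurable
    ultimately show ?thesis by simp
  qed
  show ?thesis unfolding measurable_count_space_eq2[OF finite_perms]
  proof (intro conjI ballI)
    show "(\<lambda>x. kemeny n (P x)) \<in> space \<mu> \<rightarrow> perms n" using kem_perm T by auto
  next
    fix \<tau> assume \<tau>: "\<tau> \<in> perms n"
    have "(\<lambda>x. kemeny n (P x)) -` {\<tau>} \<inter> space \<mu> = {x \<in> space \<mu>. \<forall>i\<in>{1..n}. 1 + (\<Sum>k\<in>{1..n}. if k \<noteq> i \<and> pairp (P x) i k < 1/2 then 1 else 0) = real (\<tau> i)}"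
    proof (intro set_eqI iffI)
      fix x assume "x \<in> (\<lambda>x. kemeny n (P x)) -` {\<tau>} \<inter> space \<mu>"
      then show "x \<in> {x \<in> space \<mu>. \<forall>i\<in>{1..n}. 1 + (\<Sum>k\<in>{1..n}. if k \<noteq> i \<and> pairp (P x) i k < 1/2 then 1 else 0) = real (\<tau> i)}"
        using kem_real[of _ n "P x"] by auto
    next
      fix x assume x: "x \<in> {x \<in> space \<mu>. \<forall>i\<in>{1..n}. 1 + (\<Sum>k\<in>{1..n}. if k \<noteq> i \<and> pairp (P x) i k < 1/2 then 1 else 0) = real (\<tau> i)}"
      have "kemeny n (P x) i = \<tau> i" for i
      proof (cases "i \<in> {1..n}")
        case True
        then show ?thesis using x kem_real[OF True, of "P x"] by auto
      next
        case False
        then show ?thesis using \<tau> permutes_not_in unfolding perms_def kemeny_def by fastforce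
      qed
      then show "x \<in> (\<lambda>x. kemeny n (P x)) -` {\<tau>} \<inter> space \<mu>" using x by auto
    qed
    also have "\<dots> \<in> sets \<mu>" by measurable
    finally show "(\<lambda>x. kemeny n (P x)) -` {\<tau>} \<inter> space \<mu> \<in> sets \<mu>" .
  qed
qed
theorem lemma16:
  fixes \<mu> :: "'a measure" and P :: "'a \<Rightarrow> (nat \<Rightarrow> nat) pmf" and n :: nat
    and s :: "'a \<Rightarrow> nat \<Rightarrow> nat"
  assumes "prob_space \<mu>"
    and "n \<ge> 2"
    and "\<And>\<sigma>. (\<lambda>x. pmf (P x) \<sigma>) \<in> borel_measurable \<mu>"
    and "\<forall>x\<in>space \<mu>. in_T n (P x)"
    and "margin n \<mu> P > 0"
    and "s \<in> measurable \<mu> (count_space (perms n))"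
  shows "variance_of \<mu> P (Zs n P s)
           \<le> (real (n * (n - 1)) / (2 * margin n \<mu> P)) * (risk n \<mu> P s - risk_star n \<mu> P)"
proof -
  interpret prob_space \<mu> by (rule assms(1))
  note [measurable] = assms(3)
  have T: "\<And>x. x \<in> space \<mu> \<Longrightarrow> in_T n (P x)" using assms(4) by blast
  have sp: "\<And>x. x \<in> space \<mu> \<Longrightarrow> set_pmf (P x) \<subseteq> perms n" using T unfolding in_T_def by blast
  define H where "H = margin n \<mu> P"
  have H0: "H > 0" using assms(5) H_def by simp
  define kap where "kap = (\<lambda>x. kemeny n (P x))"
  have km: "kap \<in> measurable \<mu> (count_space (perms n))" unfolding kap_def using kap_meas[OF assms(3)] assms(4) by blast
  have sm: "s \<in> measurable \<mu> (count_space (perms n))" by (rule assms(6))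
  have s_in: "\<And>x. x \<in> space \<mu> \<Longrightarrow> s x \<in> perms n" using measurable_space[OF sm] by simp
  have stm: "(\<lambda>x. (s x, kap x)) \<in> measurable \<mu> (count_space (perms n \<times> perms n))"
    using measurable_Pair[OF sm km] pair_measure_countable[OF countable_finite[OF finite_perms] countable_finite[OF finite_perms]]
    by simp
  have Fm: "(\<lambda>x. measure_pmf.expectation (P x) (\<lambda>\<sigma>. F \<sigma> (s x) (kap x))) \<in> borel_measurable \<mu>"
    for F :: "(nat\<Rightarrow>nat) \<Rightarrow> (nat\<Rightarrow>nat) \<Rightarrow> (nat\<Rightarrow>nat) \<Rightarrow> real"
  proof -
    have hm[measurable]: "(\<lambda>x. F \<sigma> (s x) (kap x)) \<in> borel_measurable \<mu>" for \<sigma>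
    proof -
      have "(\<lambda>p. F \<sigma> (fst p) (snd p)) \<in> measurable (count_space (perms n \<times> perms n)) borel" by simp
      from measurable_compose[OF stm this] show ?thesis by simp
    qed
    have "(\<lambda>x. measure_pmf.expectation (P x) (\<lambda>\<sigma>. F \<sigma> (s x) (kap x))) \<in> borel_measurable \<mu>
       \<longleftrightarrow> (\<lambda>x. \<Sum>\<sigma>\<in>perms n. pmf (P x) \<sigma> * F \<sigma> (s x) (kap x)) \<in> borel_measurable \<mu>"
      by (rule measurable_cong) (simp add: exp_sum sp)
    moreover have "(\<lambda>x. \<Sum>\<sigma>\<in>perms n. pmf (P x) \<sigma> * F \<sigma> (s x) (kap x)) \<in> borel_measurable \<mu>"
      by measurable
    ultimately show ?thesis by simp
  qed
  have Fi: "integrable \<mu> (\<lambda>x. measure_pmf.expectation (P x) (\<lambda>\<sigma>. F \<sigma> (s x) (kap x)))"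
    if b: "\<And>x \<sigma>. x \<in> space \<mu> \<Longrightarrow> \<sigma> \<in> perms n \<Longrightarrow> \<bar>F \<sigma> (s x) (kap x)\<bar> \<le> B" for F :: "(nat\<Rightarrow>nat) \<Rightarrow> (nat\<Rightarrow>nat) \<Rightarrow> (nat\<Rightarrow>nat) \<Rightarrow> real" and B :: real
  proof (rule integrable_const_bound[where B=B])
    show "AE x in \<mu>. norm (measure_pmf.expectation (P x) (\<lambda>\<sigma>. F \<sigma> (s x) (kap x))) \<le> B"
      by (rule AE_I2) (simp add: exp_bound[OF sp] b)
  qed (rule Fm)
  have Marg: "\<forall>p\<in>pairsA n. H \<le> \<bar>pairp (P x) (fst p) (snd p) - 1/2\<bar>" if x: "x \<in> space \<mu>" for x
  proof
    fix p assume p: "p \<in> pairsA n"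
    define S where "S = (\<lambda>x. {\<bar>pairp (P x) i j - 1/2\<bar> | i j. 1 \<le> i \<and> i < j \<and> j \<le> n})"
    have Seq: "S y = (\<lambda>p. \<bar>pairp (P y) (fst p) (snd p) - 1/2\<bar>) ` pairsA n" for y
      unfolding S_def pairsA_def by force
    have fin: "finite (S y)" for y unfolding Seq using finite_pairsA by simp
    have "(1,2) \<in> pairsA n" using assms(2) unfolding pairsA_def by simp
    then have ne: "S y \<noteq> {}" for y unfolding Seq by blast
    have Mge: "0 \<le> Min (S y)" for y using fin ne unfolding Seq by (simp add: Min_ge_iff)
    have Heq: "H = (INF y\<in>space \<mu>. Min (S y))" unfolding H_def margin_def S_def ..
    have "H \<le> Min (S x)" unfolding Heq
      by (rule cINF_lower[OF _ x]) (use Mge in \<open>auto intro: bdd_belowI[of _ 0]\<close>)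
    also have "\<dots> \<le> \<bar>pairp (P x) (fst p) (snd p) - 1/2\<bar>" using fin p unfolding Seq by (intro Min_le) auto
    finally show "H \<le> \<bar>pairp (P x) (fst p) (snd p) - 1/2\<bar>" .
  qed
  have Zeq: "Zs n P s x = (\<lambda>\<sigma>. real (kendall n \<sigma> (s x)) - real (kendall n \<sigma> (kap x)))" for x
    by (simp add: Zs_def kap_def fun_eq_iff)
  define e1 where "e1 = (\<lambda>x. measure_pmf.expectation (P x) (Zs n P s x))"
  define e2 where "e2 = (\<lambda>x. measure_pmf.expectation (P x) (\<lambda>\<sigma>. (Zs n P s x \<sigma>)\<^sup>2))"
  define K where "K = real (n * (n - 1)) / (2 * H)"
  have K0: "0 \<le> K" unfolding K_def using H0 by simp
  have pw: "0 \<le> e1 x" "e2 x \<le> K * e1 x" if x: "x \<in> space \<mu>" for x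
    using pointwise[OF T[OF x] s_in[OF x] H0 Marg[OF x]] unfolding e1_def e2_def K_def Zeq kap_def by auto
  define B where "B = real (n * (n - 1))"
  have kb: "\<bar>real (kendall n a b)\<bar> \<le> B" for a b unfolding B_def using kendall_le by simp
  have diffb: "\<bar>real (kendall n \<sigma> a) - real (kendall n \<sigma> b)\<bar> \<le> B" for \<sigma> a b
    using kendall_le[of n \<sigma> a] kendall_le[of n \<sigma> b] unfolding B_def by simp
  have ie1: "integrable \<mu> e1"
    using Fi[of "\<lambda>\<sigma> a b. real (kendall n \<sigma> a) - real (kendall n \<sigma> b)" B] diffb
    unfolding e1_def Zeq by simp
  have ie2: "integrable \<mu> e2"
  proof -
    have "\<bar>(real (kendall n \<sigma> a) - real (kendall n \<sigma> b))\<^sup>2\<bar> \<le> B\<^sup>2" for \<sigma> a b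
      using power_mono[OF diffb[of \<sigma> a b] abs_ge_zero, of 2] by simp
    then show ?thesis
      using Fi[of "\<lambda>\<sigma> a b. (real (kendall n \<sigma> a) - real (kendall n \<sigma> b))\<^sup>2" "B\<^sup>2"]
      unfolding e2_def Zeq by simp
  qed
  define c where "c = expect \<mu> P (Zs n P s)"
  have c_def': "c = integral\<^sup>L \<mu> e1" unfolding c_def expect_def e1_def ..
  have var: "variance_of \<mu> P (Zs n P s) = integral\<^sup>L \<mu> (\<lambda>x. e2 x - 2 * c * e1 x + c\<^sup>2)"
    unfolding variance_of_def c_def[symmetric] unfolding expect_def
  proof (rule Bochner_Integration.integral_cong[OF refl])
    fix x assume x: "x \<in> space \<mu>"
    let ?Z = "Zs n P s x"
    have "(\<Sum>\<sigma>\<in>perms n. pmf (P x) \<sigma> * (?Z \<sigma> - c)\<^sup>2)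
        = (\<Sum>\<sigma>\<in>perms n. pmf (P x) \<sigma> * (?Z \<sigma>)\<^sup>2 - 2 * c * (pmf (P x) \<sigma> * ?Z \<sigma>) + c\<^sup>2 * pmf (P x) \<sigma>)"
      by (rule sum.cong) (simp_all add: power2_eq_square algebra_simps)
    also have "\<dots> = (\<Sum>\<sigma>\<in>perms n. pmf (P x) \<sigma> * (?Z \<sigma>)\<^sup>2) - 2 * c * (\<Sum>\<sigma>\<in>perms n. pmf (P x) \<sigma> * ?Z \<sigma>) + c\<^sup>2 * (\<Sum>\<sigma>\<in>perms n. pmf (P x) \<sigma>)"
      by (simp add: sum.distrib sum_subtractf sum_distrib_left)
    also have "\<dots> = e2 x - 2 * c * e1 x + c\<^sup>2"
      unfolding e1_def e2_def exp_sum[OF sp[OF x]] sum_pmf_eq_1[OF finite_perms sp[OF x]] by simp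
    finally show "measure_pmf.expectation (P x) (\<lambda>\<sigma>. (?Z \<sigma> - c)\<^sup>2) = e2 x - 2 * c * e1 x + c\<^sup>2"
      unfolding exp_sum[OF sp[OF x]] .
  qed
  also have "\<dots> = integral\<^sup>L \<mu> e2 - 2 * c * integral\<^sup>L \<mu> e1 + c\<^sup>2"
    using ie1 ie2 by (simp add: prob_space)
  also have "\<dots> = integral\<^sup>L \<mu> e2 - c\<^sup>2" unfolding c_def'[symmetric] by (simp add: power2_eq_square)
  also have "\<dots> \<le> integral\<^sup>L \<mu> e2" by simp
  also have "\<dots> \<le> integral\<^sup>L \<mu> (\<lambda>x. K * e1 x)"
    by (rule integral_mono) (use ie1 ie2 pw in auto)
  also have "\<dots> = K * c" unfolding c_def' by simp
  finally have v1: "variance_of \<mu> P (Zs n P s) \<le> K * c" .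
  define r1 where "r1 = (\<lambda>x. measure_pmf.expectation (P x) (\<lambda>\<sigma>. real (kendall n \<sigma> (s x))))"
  define r2 where "r2 = (\<lambda>x. measure_pmf.expectation (P x) (\<lambda>\<sigma>. real (kendall n \<sigma> (kap x))))"
  have ir1: "integrable \<mu> r1" using Fi[of "\<lambda>\<sigma> a b. real (kendall n \<sigma> a)" B] kb unfolding r1_def by simp
  have ir2: "integrable \<mu> r2" using Fi[of "\<lambda>\<sigma> a b. real (kendall n \<sigma> b)" B] kb unfolding r2_def by simp
  have rs: "risk n \<mu> P s = integral\<^sup>L \<mu> r1" unfolding risk_def expect_def r1_def by (simp add: kendall_sym)
  have rk: "risk n \<mu> P kap = integral\<^sup>L \<mu> r2" unfolding risk_def expect_def r2_def by (simp add: kendall_sym)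
  have "c = integral\<^sup>L \<mu> (\<lambda>x. r1 x - r2 x)" unfolding c_def'
    by (rule Bochner_Integration.integral_cong[OF refl]) (simp add: e1_def r1_def r2_def Zeq exp_diff[OF sp])
  also have "\<dots> = risk n \<mu> P s - risk n \<mu> P kap" using ir1 ir2 rs rk by simp
  finally have c_eq: "c = risk n \<mu> P s - risk n \<mu> P kap" .
  have "risk_star n \<mu> P \<le> risk n \<mu> P kap" unfolding risk_star_def
  proof (rule cINF_lower[OF _ km])
    show "bdd_below ((\<lambda>s. risk n \<mu> P s) ` measurable \<mu> (count_space (perms n)))"
      by (rule bdd_belowI[of _ 0]) (auto simp: risk_def expect_def intro!: integral_nonneg)
  qed
  then have "c \<le> risk n \<mu> P s - risk_star n \<mu> P" using c_eq by simp
  then have "K * c \<le> K * (risk n \<mu> P s - risk_star n \<mu> P)" using K0 by (rule mult_left_mono)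
  then show ?thesis using v1 unfolding K_def H_def by simp
qed
end
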